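(* Let $A$ be a distributive meet-complemented lattice in which $\Box x$ and $\Diamond x$ exist for every $x\in A$ and such that $\Box a\le\Box\Box a$ for all $a\in A$. Then for every $a\in A$: (i) $\Diamond\neg\Box a=\neg\Box a$; (ii) $\neg\neg\Diamond a\le\Diamond a$; (iii) $\neg\Box\neg a\le\Diamond a$; (iv) $\Diamond a=\neg\Box\neg a$.
   Context: A meet-complemented lattice is a lattice $(L,\le)$ such that for every $a\in L$ the element $\neg a=\max\{b\in L: a\wedge b\le c\ \text{for all } c\in L\}$ exists; it is bounded with bottom $0$ and top $1$. For $a\in L$, $\Box a=\max\{b\in L: a\vee\neg b=1\}$ and $\Diamond a=\min\{b\in L: \neg a\vee b=1\}$. *)

theory Defs
  imports Main
begin

definition has_greatest :: "('a::order \<Rightarrow> bool) \<Rightarrow> bool" where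
  "has_greatest P \<longleftrightarrow> (\<exists>x. P x \<and> (\<forall>y. P y \<longrightarrow> y \<le> x))"

definition has_least :: "('a::order \<Rightarrow> bool) \<Rightarrow> bool" where
  "has_least P \<longleftrightarrow> (\<exists>x. P x \<and> (\<forall>y. P y \<longrightarrow> x \<le> y))"

definition mc_neg :: "'a::bounded_lattice \<Rightarrow> 'a" where
  "mc_neg a = (GREATEST b. \<forall>c. inf a b \<le> c)"

definition mc_box :: "'a::bounded_lattice \<Rightarrow> 'a" where
  "mc_box a = (GREATEST b. sup a (mc_neg b) = top)"

definition mc_dia :: "'a::bounded_lattice \<Rightarrow> 'a" where
  "mc_dia a = (LEAST b. sup (mc_neg a) b = top)"

end

theory Submission
  imports Defs
begin

theorem proposition23:
  fixes dummy :: "'a::{distrib_lattice, bounded_lattice}"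
  assumes neg_ex: "\<And>a::'a. has_greatest (\<lambda>b. \<forall>c. inf a b \<le> c)"
    and box_ex: "\<And>a::'a. has_greatest (\<lambda>b. sup a (mc_neg b) = top)"
    and dia_ex: "\<And>a::'a. has_least (\<lambda>b. sup (mc_neg a) b = top)"
    and box4: "\<And>a::'a. mc_box a \<le> mc_box (mc_box a)"
  shows "\<forall>a::'a. mc_dia (mc_neg (mc_box a)) = mc_neg (mc_box a)
           \<and> mc_neg (mc_neg (mc_dia a)) \<le> mc_dia a
           \<and> mc_neg (mc_box (mc_neg a)) \<le> mc_dia a
           \<and> mc_dia a = mc_neg (mc_box (mc_neg a))"
proof -
  have N: "\<And>a::'a. (\<forall>c. inf a (mc_neg a) \<le> c) \<and> (\<forall>y. (\<forall>c. inf a y \<le> c) \<longrightarrow> y \<le> mc_neg a)"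
  proof -
    fix a :: 'a
    obtain x where x: "\<forall>c. inf a x \<le> c" "\<forall>y. (\<forall>c. inf a y \<le> c) \<longrightarrow> y \<le> x"
      using neg_ex[of a] unfolding has_greatest_def by blast
    have "mc_neg a = x" unfolding mc_neg_def
      by (rule Greatest_equality) (use x in auto)
    then show "?thesis a" using x by simp
  qed
  have N1: "\<And>a::'a. inf a (mc_neg a) = bot" using N by (meson bot_unique)
  have N2: "\<And>a b::'a. inf a b = bot \<Longrightarrow> b \<le> mc_neg a" using N by simp
  have B: "\<And>a::'a. sup a (mc_neg (mc_box a)) = top \<and> (\<forall>y. sup a (mc_neg y) = top \<longrightarrow> y \<le> mc_box a)"
  proof -
    fix a :: 'a
    obtain x where x: "sup a (mc_neg x) = top" "\<forall>y. sup a (mc_neg y) = top \<longrightarrow> y \<le> x"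
      using box_ex[of a] unfolding has_greatest_def by blast
    have "mc_box a = x" unfolding mc_box_def
      by (rule Greatest_equality) (use x in auto)
    then show "?thesis a" using x by simp
  qed
  have B1: "\<And>a::'a. sup a (mc_neg (mc_box a)) = top" using B by blast
  have B2: "\<And>a b::'a. sup a (mc_neg b) = top \<Longrightarrow> b \<le> mc_box a" using B by blast
  have D: "\<And>a::'a. sup (mc_neg a) (mc_dia a) = top \<and> (\<forall>y. sup (mc_neg a) y = top \<longrightarrow> mc_dia a \<le> y)"
  proof -
    fix a :: 'a
    obtain x where x: "sup (mc_neg a) x = top" "\<forall>y. sup (mc_neg a) y = top \<longrightarrow> x \<le> y"
      using dia_ex[of a] unfolding has_least_def by blast
    have "mc_dia a = x" unfolding mc_dia_def
      by (rule Least_equality) (use x in auto)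
    then show "?thesis a" using x by simp
  qed
  have D1: "\<And>a::'a. sup (mc_neg a) (mc_dia a) = top" using D by blast
  have D2: "\<And>a b::'a. sup (mc_neg a) b = top \<Longrightarrow> mc_dia a \<le> b" using D by blast
  have anti: "\<And>x y::'a. x \<le> y \<Longrightarrow> mc_neg y \<le> mc_neg x"
  proof -
    fix x y :: 'a assume "x \<le> y"
    then have "inf x (mc_neg y) \<le> inf y (mc_neg y)" by (meson inf_mono order_refl)
    then show "mc_neg y \<le> mc_neg x" using N1 N2 by (metis bot_unique)
  qed
  have dn: "\<And>x::'a. x \<le> mc_neg (mc_neg x)"
    using N1 N2 by (metis inf_commute)
  have compl_dn: "\<And>c::'a. sup c (mc_neg c) = top \<Longrightarrow> mc_neg (mc_neg c) \<le> c"
  proof -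
    fix c :: 'a assume h: "sup c (mc_neg c) = top"
    have "mc_neg (mc_neg c) = inf (mc_neg (mc_neg c)) (sup c (mc_neg c))" using h by simp
    also have "\<dots> = sup (inf (mc_neg (mc_neg c)) c) (inf (mc_neg (mc_neg c)) (mc_neg c))"
      by (rule inf_sup_distrib1)
    also have "\<dots> = inf (mc_neg (mc_neg c)) c" using N1[of "mc_neg c"] by (simp add: inf_commute)
    also have "\<dots> \<le> c" by simp
    finally show "mc_neg (mc_neg c) \<le> c" .
  qed
  have boxc: "\<And>a::'a. sup (mc_box a) (mc_neg (mc_box a)) = top"
  proof -
    fix a :: 'a
    have "sup (mc_box a) (mc_neg (mc_box (mc_box a))) = top" by (rule B1)
    moreover have "mc_neg (mc_box (mc_box a)) \<le> mc_neg (mc_box a)" using anti box4 by blast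
    ultimately show "sup (mc_box a) (mc_neg (mc_box a)) = top"
      by (metis sup_mono order_refl top_unique)
  qed
  have gal1: "\<And>a b::'a. mc_dia a \<le> b \<Longrightarrow> a \<le> mc_box b"
  proof -
    fix a b :: 'a assume "mc_dia a \<le> b"
    then have "sup b (mc_neg a) = top" using D1[of a]
      by (metis sup_commute sup_mono order_refl top_unique)
    then show "a \<le> mc_box b" by (rule B2)
  qed
  have gal2: "\<And>a b::'a. a \<le> mc_box b \<Longrightarrow> mc_dia a \<le> b"
  proof -
    fix a b :: 'a assume "a \<le> mc_box b"
    then have "mc_neg (mc_box b) \<le> mc_neg a" by (rule anti)
    then have "sup (mc_neg a) b = top" using B1[of b]
      by (metis sup_commute sup_mono order_refl top_unique)
    then show "mc_dia a \<le> b" by (rule D2)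
  qed
  have boxle: "\<And>a::'a. mc_box a \<le> a"
  proof -
    fix a :: 'a
    have "mc_box a = inf (mc_box a) (sup a (mc_neg (mc_box a)))" using B1 by simp
    also have "\<dots> = sup (inf (mc_box a) a) (inf (mc_box a) (mc_neg (mc_box a)))"
      by (rule inf_sup_distrib1)
    also have "\<dots> = inf (mc_box a) a" using N1 by simp
    finally show "mc_box a \<le> a" by (metis inf.cobounded2)
  qed
  show ?thesis
  proof
    fix a :: 'a
    have i: "mc_dia (mc_neg (mc_box a)) = mc_neg (mc_box a)"
    proof (rule antisym)
      have "sup (mc_neg (mc_box a)) (mc_neg (mc_neg (mc_box a))) = top"
        using boxc[of a] compl_dn[OF boxc[of a]] dn[of "mc_box a"]
        by (metis antisym sup_commute)
      then have "mc_neg (mc_box a) \<le> mc_box (mc_neg (mc_box a))" by (rule B2)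
      then show "mc_dia (mc_neg (mc_box a)) \<le> mc_neg (mc_box a)" by (rule gal2)
      have "mc_dia (mc_neg (mc_box a)) \<le> mc_dia (mc_neg (mc_box a))" by simp
      then have "mc_neg (mc_box a) \<le> mc_box (mc_dia (mc_neg (mc_box a)))" by (rule gal1)
      then show "mc_neg (mc_box a) \<le> mc_dia (mc_neg (mc_box a))"
        using boxle order_trans by blast
    qed
    have dd: "mc_dia a = mc_box (mc_dia a)"
    proof (rule antisym)
      have "a \<le> mc_box (mc_dia a)" using gal1 by blast
      then have "a \<le> mc_box (mc_box (mc_dia a))" using box4 order_trans by blast
      then show "mc_dia a \<le> mc_box (mc_dia a)" by (rule gal2)
    qed (rule boxle)
    have ii: "mc_neg (mc_neg (mc_dia a)) \<le> mc_dia a"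
      using compl_dn boxc dd by metis
    have up: "mc_dia a \<le> mc_neg (mc_box (mc_neg a))"
    proof -
      have "inf a (mc_box (mc_neg a)) = bot"
        using boxle[of "mc_neg a"] N1[of a] by (metis inf_mono order_refl bot_unique)
      then have "a \<le> mc_neg (mc_box (mc_neg a))" using N2 by (metis inf_commute)
      have "sup (mc_neg a) (mc_neg (mc_box (mc_neg a))) = top" by (rule B1)
      then show ?thesis by (rule D2)
    qed
    have iii: "mc_neg (mc_box (mc_neg a)) \<le> mc_dia a"
    proof -
      have "sup (mc_neg a) (mc_dia a) = top" by (rule D1)
      moreover have "mc_dia a \<le> mc_neg (mc_neg (mc_dia a))" by (rule dn)
      ultimately have "sup (mc_neg a) (mc_neg (mc_neg (mc_dia a))) = top"
        by (metis sup_mono order_refl top_unique)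
      then have "mc_neg (mc_dia a) \<le> mc_box (mc_neg a)" by (rule B2)
      then have "mc_neg (mc_box (mc_neg a)) \<le> mc_neg (mc_neg (mc_dia a))" by (rule anti)
      then show ?thesis using ii order_trans by blast
    qed
    show "mc_dia (mc_neg (mc_box a)) = mc_neg (mc_box a)
           \<and> mc_neg (mc_neg (mc_dia a)) \<le> mc_dia a
           \<and> mc_neg (mc_box (mc_neg a)) \<le> mc_dia a
           \<and> mc_dia a = mc_neg (mc_box (mc_neg a))"
      using i ii iii up antisym by blast
  qed
qed

end
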